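(* In the two-state model with $\delta(t)=\tfrac12e^{-t}+\tfrac12e^{-2t}$, $g_1(a)=-a^2$ and $g_2(b)=2-(1-b)^2$, the generator $Q^*\sim(5/12,7/12)$ is the unique weak equilibrium, and it is a strong equilibrium.
   Context: Two-state model: $S=\{1,2\}$, admissible rows unrestricted ($D_i=E_i$), so every admissible generator has the form $Q=\begin{pmatrix}-a&a\\ b&-b\end{pmatrix}$ with $a,b\ge0$, written $Q\sim(a,b)$. The payoff is $f(t,1,(-a,a))=\delta(t)g_1(a)$ and $f(t,2,(b,-b))=\delta(t)g_2(b)$. $X$ is a continuous-time Markov chain with generator $Q$; $F(i,Q)=\mathbb E_{i,Q}[\int_0^\infty f(t,X_t,Q_{X_t})dt]$. $Q\otimes_\varepsilon Q'$: generator $Q$ on $[0,\varepsilon]$, then $Q'$ on $(\varepsilon,\infty)$, with expected payoff $F(i,Q\otimes_\varepsilon Q')$. $Q^*$ is a weak equilibrium if $\liminf_{\varepsilon\downarrow0}\varepsilon^{-1}(F(i,Q^* )-F(i,Q\otimes_\varepsilon Q^* ))\ge0$ for all admissible $Q$ and $i\in S$; a strong equilibrium if for every $i,Q$ there is $\varepsilon>0$ with $F(i,Q^* )\ge F(i,Q\otimes_{\varepsilon'}Q^* )$ for all $0<\varepsilon'\le\varepsilon$. *)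

theory Defs
  imports "HOL-Analysis.Analysis"
begin

text \<open>Two-state model, states 1 and 2. A generator Q ~ (a,b) is represented by the pair (a,b):
  Q = [[-a, a], [b, -b]].\<close>

type_synonym gen = "real \<times> real"

definition admissible :: "gen \<Rightarrow> bool" where
  "admissible Q \<longleftrightarrow> fst Q \<ge> 0 \<and> snd Q \<ge> 0"

definition genQ :: "gen \<Rightarrow> nat \<Rightarrow> nat \<Rightarrow> real" where
  "genQ Q i j =
     (if i = 1 then (if j = 1 then - fst Q else if j = 2 then fst Q else 0)
      else if i = 2 then (if j = 1 then snd Q else if j = 2 then - snd Q else 0)
      else 0)"

fun gpow :: "gen \<Rightarrow> nat \<Rightarrow> nat \<Rightarrow> nat \<Rightarrow> real" where
  "gpow Q 0 i j = (if i = j then 1 else 0)"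
| "gpow Q (Suc n) i j = (\<Sum>k\<in>{1,2}. gpow Q n i k * genQ Q k j)"

definition trans :: "gen \<Rightarrow> real \<Rightarrow> nat \<Rightarrow> nat \<Rightarrow> real" where
  "trans Q t i j = (\<Sum>n. t ^ n / fact n * gpow Q n i j)"

definition pay :: "(real \<Rightarrow> real) \<Rightarrow> (real \<Rightarrow> real) \<Rightarrow> (real \<Rightarrow> real) \<Rightarrow> real \<Rightarrow> nat \<Rightarrow> gen \<Rightarrow> real" where
  "pay \<delta> g1 g2 t j Q = (if j = 1 then \<delta> t * g1 (fst Q) else \<delta> t * g2 (snd Q))"

text \<open>F(i,Q) = E_{i,Q}[ int_0^oo f(t,X_t,Q_{X_t}) dt ].\<close>
definition F :: "(real \<Rightarrow> real) \<Rightarrow> (real \<Rightarrow> real) \<Rightarrow> (real \<Rightarrow> real) \<Rightarrow> nat \<Rightarrow> gen \<Rightarrow> real" where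
  "F \<delta> g1 g2 i Q =
     set_lebesgue_integral lborel {0..}
       (\<lambda>t. \<Sum>j\<in>{1,2}. trans Q t i j * pay \<delta> g1 g2 t j Q)"

text \<open>F(i, Q \<otimes>_eps Q'): generator Q on [0,eps], then Q' on (eps,oo) (Markov property).\<close>
definition Fcat :: "(real \<Rightarrow> real) \<Rightarrow> (real \<Rightarrow> real) \<Rightarrow> (real \<Rightarrow> real) \<Rightarrow> nat \<Rightarrow> gen \<Rightarrow> real \<Rightarrow> gen \<Rightarrow> real" where
  "Fcat \<delta> g1 g2 i Q \<epsilon> Q' =
     set_lebesgue_integral lborel {0..\<epsilon>}
       (\<lambda>t. \<Sum>j\<in>{1,2}. trans Q t i j * pay \<delta> g1 g2 t j Q)
   + set_lebesgue_integral lborel {\<epsilon><..}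
       (\<lambda>t. \<Sum>k\<in>{1,2}. \<Sum>j\<in>{1,2}.
              trans Q \<epsilon> i k * trans Q' (t - \<epsilon>) k j * pay \<delta> g1 g2 t j Q')"

definition weak_eq :: "(real \<Rightarrow> real) \<Rightarrow> (real \<Rightarrow> real) \<Rightarrow> (real \<Rightarrow> real) \<Rightarrow> gen \<Rightarrow> bool" where
  "weak_eq \<delta> g1 g2 Qs \<longleftrightarrow> admissible Qs \<and>
     (\<forall>Q i. admissible Q \<and> i \<in> {1,2} \<longrightarrow>
        Liminf (at_right 0)
          (\<lambda>\<epsilon>. ereal ((F \<delta> g1 g2 i Qs - Fcat \<delta> g1 g2 i Q \<epsilon> Qs) / \<epsilon>)) \<ge> 0)"

definition strong_eq :: "(real \<Rightarrow> real) \<Rightarrow> (real \<Rightarrow> real) \<Rightarrow> (real \<Rightarrow> real) \<Rightarrow> gen \<Rightarrow> bool" where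
  "strong_eq \<delta> g1 g2 Qs \<longleftrightarrow> admissible Qs \<and>
     (\<forall>Q i. admissible Q \<and> i \<in> {1,2} \<longrightarrow>
        (\<exists>\<epsilon>>0. \<forall>\<epsilon>'. 0 < \<epsilon>' \<and> \<epsilon>' \<le> \<epsilon> \<longrightarrow>
           F \<delta> g1 g2 i Qs \<ge> Fcat \<delta> g1 g2 i Q \<epsilon>' Qs))"

end

theory Submission
  imports Defs
begin

definition sQ :: "gen \<Rightarrow> real" where "sQ Q = fst Q + snd Q"

lemma genQ_sq:
  assumes "i \<in> {1,2}" "j \<in> {1,2}"
  shows "(\<Sum>k\<in>{1,2::nat}. genQ Q i k * genQ Q k j) = - sQ Q * genQ Q i j"
  using assms by (auto simp: genQ_def sQ_def algebra_simps)

lemma gpow_Suc: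
  assumes "i \<in> {1,2}" "j \<in> {1,2}"
  shows "gpow Q (Suc n) i j = (- sQ Q) ^ n * genQ Q i j"
  using assms
proof (induction n arbitrary: j)
  case 0
  then show ?case by (auto simp: genQ_def)
next
  case (Suc n)
  have "gpow Q (Suc (Suc n)) i j = (\<Sum>k\<in>{1,2::nat}. gpow Q (Suc n) i k * genQ Q k j)"
    by (simp only: gpow.simps)
  also have "\<dots> = (\<Sum>k\<in>{1,2::nat}. (- sQ Q) ^ n * (genQ Q i k * genQ Q k j))"
    using Suc.IH[OF Suc.prems(1)] by (intro sum.cong) (auto simp del: gpow.simps)
  also have "\<dots> = (- sQ Q) ^ n * (\<Sum>k\<in>{1,2::nat}. genQ Q i k * genQ Q k j)"
    by (simp only: sum_distrib_left)
  also have "\<dots> = (- sQ Q) ^ Suc n * genQ Q i j"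
    using genQ_sq[OF assms(1) Suc.prems(2)] by simp
  finally show ?case .
qed

lemma adm_s0: "admissible Q \<Longrightarrow> sQ Q = 0 \<Longrightarrow> genQ Q i j = 0"
  by (cases Q) (auto simp: admissible_def sQ_def genQ_def)

lemma trans_eq:
  assumes "admissible Q" "i \<in> {1,2}" "j \<in> {1,2}"
  shows "trans Q t i j = (if i = j then 1 else 0) + genQ Q i j * (1 - exp (- (sQ Q * t))) / sQ Q"
proof (cases "sQ Q = 0")
  case True
  have g0: "genQ Q i j = 0" using adm_s0[OF assms(1) True] .
  have "(\<lambda>n. t ^ n / fact n * gpow Q n i j) = (\<lambda>n. if n = 0 then (if i = j then 1 else 0) else 0)"
  proof
    fix n show "t ^ n / fact n * gpow Q n i j = (if n = 0 then (if i = j then 1 else 0) else 0)"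
      by (cases n) (auto simp: gpow_Suc[OF assms(2,3)] g0 simp del: gpow.simps(2))
  qed
  moreover have "(\<lambda>n::nat. if n = 0 then (if i = j then 1 else 0) else (0::real)) sums (if i = j then 1 else 0)"
    using sums_single[of 0 "\<lambda>_. (if i = j then 1 else 0::real)"] by simp
  ultimately show ?thesis unfolding trans_def using g0 by (simp add: sums_iff)
next
  case False
  define s where "s = sQ Q"
  define g where "g = genQ Q i j"
  define c where "c = (if i = j then 1 else 0::real)"
  have e: "(\<lambda>n. (- s * t) ^ n / fact n) sums exp (- s * t)"
    using exp_converges[of "- s * t"] by (simp add: divide_inverse mult.commute)
  have "(\<lambda>n. (if n = 0 then c else 0) + (- g / s) * ((- s * t) ^ n / fact n - (if n = 0 then 1 else 0)))
      sums (c + (- g / s) * (exp (- s * t) - 1))"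
    by (intro sums_add sums_mult sums_diff e sums_single[of 0 "\<lambda>_. c", simplified]
          sums_single[of 0 "\<lambda>_. 1::real", simplified])
  moreover have "(\<lambda>n. t ^ n / fact n * gpow Q n i j) =
      (\<lambda>n. (if n = 0 then c else 0) + (- g / s) * ((- s * t) ^ n / fact n - (if n = 0 then 1 else 0)))"
  proof
    fix n show "t ^ n / fact n * gpow Q n i j =
      (if n = 0 then c else 0) + (- g / s) * ((- s * t) ^ n / fact n - (if n = 0 then 1 else 0))"
    proof (cases n)
      case 0 then show ?thesis by (simp add: c_def)
    next
      case (Suc m)
      have pw: "(- (s * t)) ^ m = (- s) ^ m * t ^ m" by (metis mult_minus_left power_mult_distrib)
      then show ?thesis using Suc False
        by (simp del: gpow.simps add: gpow_Suc[OF assms(2,3)] g_def s_def field_simps)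
    qed
  qed
  ultimately have "trans Q t i j = c + (- g / s) * (exp (- s * t) - 1)"
    unfolding trans_def by (simp add: sums_iff)
  then show ?thesis using False by (simp add: c_def g_def s_def field_simps)
qed

lemma hk_set:
  fixes f :: "real \<Rightarrow> real"
  assumes S: "S \<in> sets lborel" and fm: "f \<in> borel_measurable borel"
    and nn: "\<And>x. x \<in> S \<Longrightarrow> 0 \<le> f x" and I: "(f has_integral J) S"
  shows "set_integrable lborel S f" "(LINT x:S|lborel. f x) = J"
proof -
  have J0: "0 \<le> J" using I by (rule has_integral_nonneg) (use nn in auto)
  have nn1: "(\<integral>\<^sup>+x. ennreal (f x) * indicator S x \<partial>lborel) = ennreal J"
    using nn I by (rule nn_integral_has_integral_lebesgue')
  have "(\<integral>\<^sup>+x. ennreal (indicator S x *\<^sub>R f x) \<partial>lborel) = (\<integral>\<^sup>+x. ennreal (f x) * indicator S x \<partial>lborel)"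
    by (intro nn_integral_cong) (auto simp: indicator_def)
  with nn1 have "(\<integral>\<^sup>+x. ennreal (indicator S x *\<^sub>R f x) \<partial>lborel) = ennreal J" by simp
  then have hb: "has_bochner_integral lborel (\<lambda>x. indicator S x *\<^sub>R f x) J"
    using J0 S fm nn by (intro has_bochner_integral_nn_integral) (auto simp: indicator_def)
  then show "set_integrable lborel S f" "(LINT x:S|lborel. f x) = J"
    unfolding set_integrable_def set_lebesgue_integral_def
    by (auto simp: has_bochner_integral_iff)
qed

lemma hk_Ici: "(d::real) > 0 \<Longrightarrow> ((\<lambda>t. exp (- (d * t))) has_integral exp (- (d * u)) / d) {u..}"
  using has_integral_exp_minus_to_infinity[of d u] by simp

lemma hk_Ioi: "(d::real) > 0 \<Longrightarrow> ((\<lambda>t. exp (- (d * t))) has_integral exp (- (d * u)) / d) {u<..}"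
proof -
  assume d: "d > 0"
  have "negligible {x \<in> {u..} - {u<..}. exp (- (d * x)) \<noteq> 0}"
    by (rule negligible_subset[of "{u}"]) force+
  moreover have "negligible {x \<in> {u<..} - {u..}. exp (- (d * x)) \<noteq> (0::real)}"
    by (rule negligible_subset[of "{}"]) auto
  ultimately have "((\<lambda>t. exp (- (d * t))) has_integral exp (- (d * u)) / d) {u..} \<longleftrightarrow>
     ((\<lambda>t. exp (- (d * t))) has_integral exp (- (d * u)) / d) {u<..}"
    by (rule has_integral_spike_set_eq)
  then show ?thesis using hk_Ici[OF d, of u] by blast
qed

lemma hk_Icc: "(d::real) > 0 \<Longrightarrow> 0 \<le> e \<Longrightarrow> ((\<lambda>t. exp (- (d * t))) has_integral (1 - exp (- (d * e))) / d) {0..e}"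
proof -
  assume d: "d > 0" and e: "0 \<le> e"
  have "((\<lambda>t. exp (- (d * t))) has_integral ((- exp (- (d * e)) / d) - (- exp (- (d * 0)) / d))) {0..e}"
    using d e
    by (intro fundamental_theorem_of_calculus[of 0 e "\<lambda>x. - exp (- (d * x)) / d"])
       (auto intro!: derivative_eq_intros
             simp flip: has_real_derivative_iff_has_vector_derivative)
  then show ?thesis by (simp add: diff_divide_distrib)
qed

definition dl :: "real \<Rightarrow> real" where "dl t = exp (- t) / 2 + exp (- 2 * t) / 2"

lemma IL:
  assumes S: "S \<in> sets lborel" and c: "c \<ge> 0"
    and J: "\<And>d. d > 0 \<Longrightarrow> ((\<lambda>t. exp (- (d * t))) has_integral J d) S"
  shows "set_integrable lborel S (\<lambda>t. dl t * (U - V * exp (- (c * t))))"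
    "(LINT t:S|lborel. dl t * (U - V * exp (- (c * t)))) =
       U * (J 1 / 2 + J 2 / 2) - V * (J (1 + c) / 2 + J (2 + c) / 2)"
proof -
  have bi: "set_integrable lborel S (\<lambda>t. exp (- (d * t)))" "(LINT t:S|lborel. exp (- (d * t))) = J d"
    if "d > 0" for d
    using hk_set[OF S _ _ J[OF that]] by auto
  have fe: "(\<lambda>t. dl t * (U - V * exp (- (c * t)))) =
     (\<lambda>t. (U / 2) * exp (- (1 * t)) + (U / 2) * exp (- (2 * t))
        - ((V / 2) * exp (- ((1 + c) * t)) + (V / 2) * exp (- ((2 + c) * t))))"
  proof
    fix t
    have "exp (- ((1 + c) * t)) = exp (- t) * exp (- (c * t))"
      by (simp add: exp_add[symmetric] algebra_simps)
    moreover have "exp (- ((2 + c) * t)) = exp (- (2 * t)) * exp (- (c * t))"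
      by (simp add: exp_add[symmetric] algebra_simps)
    ultimately show "dl t * (U - V * exp (- (c * t))) = (U / 2) * exp (- (1 * t)) + (U / 2) * exp (- (2 * t))
        - ((V / 2) * exp (- ((1 + c) * t)) + (V / 2) * exp (- ((2 + c) * t)))"
      by (simp add: dl_def field_simps)
  qed
  have p1: "(1::real) > 0" "(2::real) > 0" "1 + c > 0" "2 + c > 0" using c by auto
  note i1 = bi[OF p1(1)] and i2 = bi[OF p1(2)] and i3 = bi[OF p1(3)] and i4 = bi[OF p1(4)]
  have a1: "set_integrable lborel S (\<lambda>t. (U / 2) * exp (- (1 * t)))"
    by (rule set_integrable_mult_right[OF i1(1)])
  have a2: "set_integrable lborel S (\<lambda>t. (U / 2) * exp (- (2 * t)))"
    by (rule set_integrable_mult_right[OF i2(1)])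
  have a3: "set_integrable lborel S (\<lambda>t. (V / 2) * exp (- ((1 + c) * t)))"
    by (rule set_integrable_mult_right[OF i3(1)])
  have a4: "set_integrable lborel S (\<lambda>t. (V / 2) * exp (- ((2 + c) * t)))"
    by (rule set_integrable_mult_right[OF i4(1)])
  note b12 = set_integral_add[OF a1 a2] and b34 = set_integral_add[OF a3 a4]
  note b = set_integral_diff[OF b12(1) b34(1)]
  show "set_integrable lborel S (\<lambda>t. dl t * (U - V * exp (- (c * t))))"
    unfolding fe by (rule b(1))
  show "(LINT t:S|lborel. dl t * (U - V * exp (- (c * t)))) =
       U * (J 1 / 2 + J 2 / 2) - V * (J (1 + c) / 2 + J (2 + c) / 2)"
    unfolding fe b(2) b12(2) b34(2) set_integral_mult_right i1(2) i2(2) i3(2) i4(2)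
    by (simp add: algebra_simps)
qed

definition gQ :: "(real \<Rightarrow> real) \<Rightarrow> (real \<Rightarrow> real) \<Rightarrow> gen \<Rightarrow> nat \<Rightarrow> real" where
  "gQ g1 g2 Q j = (if j = 1 then g1 (fst Q) else g2 (snd Q))"

definition kap :: "(real \<Rightarrow> real) \<Rightarrow> (real \<Rightarrow> real) \<Rightarrow> gen \<Rightarrow> nat \<Rightarrow> real" where
  "kap g1 g2 Q i = (\<Sum>j\<in>{1,2::nat}. genQ Q i j * gQ g1 g2 Q j)"

lemma pay_eq: "pay \<delta> g1 g2 t j Q = \<delta> t * gQ g1 g2 Q j"
  by (simp add: pay_def gQ_def)

lemma P0:
  assumes "admissible Q" "k \<in> {1,2}"
  shows "(\<Sum>j\<in>{1,2::nat}. trans Q u k j * gQ g1 g2 Q j) =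
     gQ g1 g2 Q k + kap g1 g2 Q k / sQ Q * (1 - exp (- (sQ Q * u)))"
  using assms(2)
  by (auto simp: trans_eq[OF assms(1)] kap_def divide_inverse algebra_simps)

lemma integrand_F:
  assumes "admissible Q" "i \<in> {1,2}"
  shows "(\<Sum>j\<in>{1,2::nat}. trans Q t i j * pay dl g1 g2 t j Q) =
    dl t * ((gQ g1 g2 Q i + kap g1 g2 Q i / sQ Q) - kap g1 g2 Q i / sQ Q * exp (- (sQ Q * t)))"
proof -
  have "(\<Sum>j\<in>{1,2::nat}. trans Q t i j * pay dl g1 g2 t j Q) =
     dl t * (\<Sum>j\<in>{1,2::nat}. trans Q t i j * gQ g1 g2 Q j)"
    by (simp add: pay_eq sum_distrib_left algebra_simps)
  also have "\<dots> = dl t * ((gQ g1 g2 Q i + kap g1 g2 Q i / sQ Q) - kap g1 g2 Q i / sQ Q * exp (- (sQ Q * t)))"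
    by (simp only: P0[OF assms]) (simp add: algebra_simps diff_divide_distrib)
  finally show ?thesis .
qed

lemma sQ_nonneg: "admissible Q \<Longrightarrow> sQ Q \<ge> 0"
  by (simp add: admissible_def sQ_def)

lemma F_eq:
  assumes "admissible Qs" "i \<in> {1,2}"
  shows "F dl g1 g2 i Qs =
    (gQ g1 g2 Qs i + kap g1 g2 Qs i / sQ Qs) * (1 / 2 + 1 / 2 / 2)
     - kap g1 g2 Qs i / sQ Qs * (1 / (1 + sQ Qs) / 2 + 1 / (2 + sQ Qs) / 2)"
proof -
  have J: "((\<lambda>t. exp (- (d * t))) has_integral (\<lambda>d. 1 / d) d) {0..}" if "d > 0" for d :: real
    using hk_Ici[OF that, of 0] by simp
  show ?thesis
    unfolding F_def integrand_F[OF assms]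
    by (subst IL(2)[OF _ sQ_nonneg[OF assms(1)] J]) auto
qed

lemma exp_shift: "exp (- ((r::real) * (t - e))) = exp (r * e) * exp (- (r * t))"
  by (simp add: mult_exp_exp right_diff_distrib')

lemma integrand_Fcat:
  assumes "admissible Qs"
  shows "(\<Sum>k\<in>{1,2::nat}. \<Sum>j\<in>{1,2::nat}. T k * trans Qs (t - e) k j * pay dl g1 g2 t j Qs) =
    dl t * ((\<Sum>k\<in>{1,2::nat}. T k * (gQ g1 g2 Qs k + kap g1 g2 Qs k / sQ Qs))
      - (\<Sum>k\<in>{1,2::nat}. T k * (kap g1 g2 Qs k / sQ Qs) * exp (sQ Qs * e)) * exp (- (sQ Qs * t)))"
proof -
  have "(\<Sum>k\<in>{1,2::nat}. \<Sum>j\<in>{1,2::nat}. T k * trans Qs (t - e) k j * pay dl g1 g2 t j Qs) =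
     dl t * (\<Sum>k\<in>{1,2::nat}. T k * (\<Sum>j\<in>{1,2::nat}. trans Qs (t - e) k j * gQ g1 g2 Qs j))"
    by (simp add: pay_eq algebra_simps)
  also have "\<dots> = dl t * (\<Sum>k\<in>{1,2::nat}. T k * (gQ g1 g2 Qs k + kap g1 g2 Qs k / sQ Qs *
       (1 - exp (sQ Qs * e) * exp (- (sQ Qs * t)))))"
  proof (intro arg_cong[where f="\<lambda>x. dl t * x"] sum.cong refl)
    fix k :: nat assume k: "k \<in> {1,2}"
    show "T k * (\<Sum>j\<in>{1,2::nat}. trans Qs (t - e) k j * gQ g1 g2 Qs j) =
      T k * (gQ g1 g2 Qs k + kap g1 g2 Qs k / sQ Qs * (1 - exp (sQ Qs * e) * exp (- (sQ Qs * t))))"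
      by (simp only: P0[OF assms k] exp_shift)
  qed
  also have "\<dots> = dl t * ((\<Sum>k\<in>{1,2::nat}. T k * (gQ g1 g2 Qs k + kap g1 g2 Qs k / sQ Qs))
      - (\<Sum>k\<in>{1,2::nat}. T k * (kap g1 g2 Qs k / sQ Qs) * exp (sQ Qs * e)) * exp (- (sQ Qs * t)))"
    by (simp add: algebra_simps)
  finally show ?thesis .
qed

lemma Fcat_eq:
  assumes "admissible Q" "admissible Qs" "i \<in> {1,2}" "e > 0"
  shows "Fcat dl g1 g2 i Q e Qs =
    ((gQ g1 g2 Q i + kap g1 g2 Q i / sQ Q) *
        ((1 - exp (- (1 * e))) / 1 / 2 + (1 - exp (- (2 * e))) / 2 / 2)
      - kap g1 g2 Q i / sQ Q *
        ((1 - exp (- ((1 + sQ Q) * e))) / (1 + sQ Q) / 2 + (1 - exp (- ((2 + sQ Q) * e))) / (2 + sQ Q) / 2))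
   + ((\<Sum>k\<in>{1,2::nat}. trans Q e i k * (gQ g1 g2 Qs k + kap g1 g2 Qs k / sQ Qs)) *
        (exp (- (1 * e)) / 1 / 2 + exp (- (2 * e)) / 2 / 2)
      - (\<Sum>k\<in>{1,2::nat}. trans Q e i k * (kap g1 g2 Qs k / sQ Qs) * exp (sQ Qs * e)) *
        (exp (- ((1 + sQ Qs) * e)) / (1 + sQ Qs) / 2 + exp (- ((2 + sQ Qs) * e)) / (2 + sQ Qs) / 2))"
proof -
  have J1: "((\<lambda>t. exp (- (d * t))) has_integral (\<lambda>d. (1 - exp (- (d * e))) / d) d) {0..e}" if "d > 0" for d :: real
    using hk_Icc[OF that, of e] assms(4) by simp
  have J2: "((\<lambda>t. exp (- (d * t))) has_integral (\<lambda>d. exp (- (d * e)) / d) d) {e<..}" if "d > 0" for d :: real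
    using hk_Ioi[OF that, of e] by simp
  show ?thesis
    unfolding Fcat_def integrand_F[OF assms(1,3)] integrand_Fcat[OF assms(2), of "\<lambda>k. trans Q e i k"]
    apply (subst IL(2)[OF _ sQ_nonneg[OF assms(1)] J1], simp, simp)
    apply (subst IL(2)[OF _ sQ_nonneg[OF assms(2)] J2], simp, simp)
    apply simp
    done
qed

definition ev5 :: "(nat \<Rightarrow> real) \<Rightarrow> real \<Rightarrow> real \<Rightarrow> real" where
  "ev5 b s x = b 0 + b 1 * exp (- x) + b 2 * exp (- (2 * x)) + b 3 * exp (- ((1 + s) * x))
     + b 4 * exp (- ((2 + s) * x))"

definition dv5 :: "(nat \<Rightarrow> real) \<Rightarrow> real \<Rightarrow> nat \<Rightarrow> real" where
  "dv5 b s n = (if n = 0 then 0 else if n = 1 then - b 1 else if n = 2 then - 2 * b 2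
     else if n = 3 then - (1 + s) * b 3 else - (2 + s) * b 4)"

lemma ev5_deriv: "(ev5 b s has_real_derivative ev5 (dv5 b s) s x) (at x)"
  unfolding ev5_def dv5_def
  by (auto intro!: derivative_eq_intros simp: algebra_simps)

lemma ev5_0: "ev5 b s 0 = b 0 + b 1 + b 2 + b 3 + b 4"
  by (simp add: ev5_def)

lemma alg5:
  fixes X Y U0 V0 U1 V1 A1 A2 B1 B2 t1 t2 d1 d2 P1 P2 R1 R2 :: real
  assumes "P1 \<noteq> 0" "P2 \<noteq> 0" "R1 \<noteq> 0" "R2 \<noteq> 0"
  shows "(U0 * (1 / 2 + 1 / 2 / 2) - V0 * (1 / R1 / 2 + 1 / R2 / 2))
    - ((U1 * ((1 - X) / 2 + (1 - X ^ 2) / 2 / 2) - V1 * ((1 - X * Y) / P1 / 2 + (1 - X ^ 2 * Y) / P2 / 2))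
      + ((d1 + t1 * (1 - Y)) * A1 + (d2 + t2 * (1 - Y)) * A2) * (X / 2 + X ^ 2 / 2 / 2)
      - ((d1 + t1 * (1 - Y)) * B1 + (d2 + t2 * (1 - Y)) * B2) * (X / R1 / 2 + X ^ 2 / R2 / 2))
   = ((U0 * (1 / 2 + 1 / 2 / 2) - V0 * (1 / R1 / 2 + 1 / R2 / 2)) - 3 / 4 * U1 + V1 * (1 / P1 / 2 + 1 / P2 / 2))
     + (U1 / 2 - ((d1 + t1) * A1 + (d2 + t2) * A2) / 2 + ((d1 + t1) * B1 + (d2 + t2) * B2) / R1 / 2) * X
     + (U1 / 4 - ((d1 + t1) * A1 + (d2 + t2) * A2) / 4 + ((d1 + t1) * B1 + (d2 + t2) * B2) / R2 / 2) * X ^ 2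
     + (- V1 / P1 / 2 + (t1 * A1 + t2 * A2) / 2 - (t1 * B1 + t2 * B2) / R1 / 2) * (X * Y)
     + (- V1 / P2 / 2 + (t1 * A1 + t2 * A2) / 4 - (t1 * B1 + t2 * B2) / R2 / 2) * (X ^ 2 * Y)"
  using assms by (simp add: field_simps power2_eq_square)

definition tau :: "gen \<Rightarrow> nat \<Rightarrow> nat \<Rightarrow> real" where "tau Q i k = genQ Q i k / sQ Q"
definition Aq :: "(real \<Rightarrow> real) \<Rightarrow> (real \<Rightarrow> real) \<Rightarrow> gen \<Rightarrow> nat \<Rightarrow> real" where
  "Aq g1 g2 Q k = gQ g1 g2 Q k + kap g1 g2 Q k / sQ Q"
definition Bq :: "(real \<Rightarrow> real) \<Rightarrow> (real \<Rightarrow> real) \<Rightarrow> gen \<Rightarrow> nat \<Rightarrow> real" where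
  "Bq g1 g2 Q k = kap g1 g2 Q k / sQ Q"
definition dd :: "nat \<Rightarrow> nat \<Rightarrow> real" where "dd i k = (if i = k then 1 else 0)"

definition bet :: "(real \<Rightarrow> real) \<Rightarrow> (real \<Rightarrow> real) \<Rightarrow> nat \<Rightarrow> gen \<Rightarrow> gen \<Rightarrow> nat \<Rightarrow> real" where
  "bet g1 g2 i Q Qs n = (let s = sQ Q; r = sQ Qs; U0 = Aq g1 g2 Qs i; V0 = Bq g1 g2 Qs i;
     U1 = Aq g1 g2 Q i; V1 = Bq g1 g2 Q i; t1 = tau Q i 1; t2 = tau Q i 2; d1 = dd i 1; d2 = dd i 2;
     A1 = Aq g1 g2 Qs 1; A2 = Aq g1 g2 Qs 2; B1 = Bq g1 g2 Qs 1; B2 = Bq g1 g2 Qs 2;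
     P1 = 1 + s; P2 = 2 + s; R1 = 1 + r; R2 = 2 + r in
     if n = 0 then (U0 * (1 / 2 + 1 / 2 / 2) - V0 * (1 / R1 / 2 + 1 / R2 / 2)) - 3 / 4 * U1 + V1 * (1 / P1 / 2 + 1 / P2 / 2)
     else if n = 1 then U1 / 2 - ((d1 + t1) * A1 + (d2 + t2) * A2) / 2 + ((d1 + t1) * B1 + (d2 + t2) * B2) / R1 / 2
     else if n = 2 then U1 / 4 - ((d1 + t1) * A1 + (d2 + t2) * A2) / 4 + ((d1 + t1) * B1 + (d2 + t2) * B2) / R2 / 2
     else if n = 3 then - V1 / P1 / 2 + (t1 * A1 + t2 * A2) / 2 - (t1 * B1 + t2 * B2) / R1 / 2
     else - V1 / P2 / 2 + (t1 * A1 + t2 * A2) / 4 - (t1 * B1 + t2 * B2) / R2 / 2)"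

lemma exp2: "exp (- (2 * (e::real))) = exp (- e) ^ 2"
proof -
  have "- (2 * e) = - e + - e" by simp
  then show ?thesis by (simp only: exp_add power2_eq_square)
qed
lemma exp1c: "exp (- ((1 + c) * (e::real))) = exp (- e) * exp (- (c * e))"
  by (simp add: mult_exp_exp algebra_simps)
lemma exp2c: "exp (- ((2 + c) * (e::real))) = exp (- e) ^ 2 * exp (- (c * e))"
  by (simp add: power2_eq_square mult_exp_exp algebra_simps)
lemma exp1r: "exp (c * (e::real)) * exp (- ((1 + c) * e)) = exp (- e)"
  by (simp add: mult_exp_exp algebra_simps)
lemma exp2r: "exp (c * (e::real)) * exp (- ((2 + c) * e)) = exp (- e) ^ 2"
  by (simp add: mult_exp_exp algebra_simps power2_eq_square)

lemma G_eq:
  assumes Q: "admissible Q" and Qs: "admissible Qs" and i: "i \<in> {1,2}" and e: "e > 0"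
  shows "F dl g1 g2 i Qs - Fcat dl g1 g2 i Q e Qs = ev5 (bet g1 g2 i Q Qs) (sQ Q) e"
proof -
  define X where "X = exp (- e)"
  define Y where "Y = exp (- (sQ Q * e))"
  have T: "trans Q e i k = dd i k + tau Q i k * (1 - Y)" if "k \<in> {1,2}" for k
    using trans_eq[OF Q i that, of e] by (simp add: dd_def tau_def Y_def)
  have F1: "F dl g1 g2 i Qs = Aq g1 g2 Qs i * (1 / 2 + 1 / 2 / 2)
      - Bq g1 g2 Qs i * (1 / (1 + sQ Qs) / 2 + 1 / (2 + sQ Qs) / 2)"
    using F_eq[OF Qs i] by (simp add: Aq_def Bq_def)
  have sum2: "(\<Sum>k\<in>{1,2::nat}. f k) = f 1 + f 2" for f :: "nat \<Rightarrow> real" by simp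
  have F2: "Fcat dl g1 g2 i Q e Qs =
      (Aq g1 g2 Q i * ((1 - X) / 2 + (1 - X ^ 2) / 2 / 2)
        - Bq g1 g2 Q i * ((1 - X * Y) / (1 + sQ Q) / 2 + (1 - X ^ 2 * Y) / (2 + sQ Q) / 2))
      + ((dd i 1 + tau Q i 1 * (1 - Y)) * Aq g1 g2 Qs 1 + (dd i 2 + tau Q i 2 * (1 - Y)) * Aq g1 g2 Qs 2)
         * (X / 2 + X ^ 2 / 2 / 2)
      - ((dd i 1 + tau Q i 1 * (1 - Y)) * Bq g1 g2 Qs 1 + (dd i 2 + tau Q i 2 * (1 - Y)) * Bq g1 g2 Qs 2)
         * (X / (1 + sQ Qs) / 2 + X ^ 2 / (2 + sQ Qs) / 2)"
  proof -
    have v: "(\<Sum>k\<in>{1,2::nat}. trans Q e i k * (kap g1 g2 Qs k / sQ Qs) * exp (sQ Qs * e)) *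
        (exp (- ((1 + sQ Qs) * e)) / (1 + sQ Qs) / 2 + exp (- ((2 + sQ Qs) * e)) / (2 + sQ Qs) / 2)
      = (\<Sum>k\<in>{1,2::nat}. trans Q e i k * Bq g1 g2 Qs k) *
        ((exp (sQ Qs * e) * exp (- ((1 + sQ Qs) * e))) / (1 + sQ Qs) / 2
          + (exp (sQ Qs * e) * exp (- ((2 + sQ Qs) * e))) / (2 + sQ Qs) / 2)"
      by (simp add: Bq_def algebra_simps)
    show ?thesis
      apply (subst Fcat_eq[OF Q Qs i e])
      apply (subst v)
      apply (simp only: exp1r exp2r)
      apply (simp only: Aq_def[symmetric])
      apply (simp only: Bq_def[symmetric])
      apply (simp only: sum2 T insert_iff simp_thms mult_1 div_by_1 exp2 exp1c exp2c)
      apply (simp only: X_def[symmetric] Y_def[symmetric])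
      done
  qed
  have "F dl g1 g2 i Qs - Fcat dl g1 g2 i Q e Qs = ev5 (bet g1 g2 i Q Qs) (sQ Q) e"
  proof -
    have nz: "1 + sQ Q \<noteq> 0" "2 + sQ Q \<noteq> 0" "1 + sQ Qs \<noteq> 0" "2 + sQ Qs \<noteq> 0"
      using sQ_nonneg[OF Q] sQ_nonneg[OF Qs] by auto
    show ?thesis
      unfolding F1 F2 alg5[OF nz]
      unfolding ev5_def bet_def Let_def exp2 exp1c exp2c X_def[symmetric] Y_def[symmetric]
      by simp
  qed
  then show ?thesis .
qed

definition D0 :: "(real \<Rightarrow> real) \<Rightarrow> (real \<Rightarrow> real) \<Rightarrow> gen \<Rightarrow> real" where
  "D0 g1 g2 Qs = (1 / (1 + sQ Qs) / 2 + 1 / (2 + sQ Qs) / 2) * (g2 (snd Qs) - g1 (fst Qs))"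

definition Hf :: "(real \<Rightarrow> real) \<Rightarrow> (real \<Rightarrow> real) \<Rightarrow> gen \<Rightarrow> gen \<Rightarrow> nat \<Rightarrow> real" where
  "Hf g1 g2 Q Qs i = gQ g1 g2 Q i + genQ Q i 2 * D0 g1 g2 Qs"

lemma val_abs:
  fixes s R1 R2 U0 V0 U1 V1 A1 A2 B1 B2 t1 t2 d1 d2 P1 P2 :: real
  shows "((U0 * (1 / 2 + 1 / 2 / 2) - V0 * (1 / R1 / 2 + 1 / R2 / 2)) - 3 / 4 * U1 + V1 * (1 / P1 / 2 + 1 / P2 / 2))
     + (U1 / 2 - ((d1 + t1) * A1 + (d2 + t2) * A2) / 2 + ((d1 + t1) * B1 + (d2 + t2) * B2) / R1 / 2)
     + (U1 / 4 - ((d1 + t1) * A1 + (d2 + t2) * A2) / 4 + ((d1 + t1) * B1 + (d2 + t2) * B2) / R2 / 2)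
     + (- V1 / P1 / 2 + (t1 * A1 + t2 * A2) / 2 - (t1 * B1 + t2 * B2) / R1 / 2)
     + (- V1 / P2 / 2 + (t1 * A1 + t2 * A2) / 4 - (t1 * B1 + t2 * B2) / R2 / 2)
   = (U0 - (d1 * A1 + d2 * A2)) * (3 / 4) - (V0 - (d1 * B1 + d2 * B2)) * (1 / R1 / 2 + 1 / R2 / 2)"
  by (simp add: algebra_simps add_divide_distrib diff_divide_distrib)

lemma bet_n:
  "bet g1 g2 i Q Qs 0 = (Aq g1 g2 Qs i * (1 / 2 + 1 / 2 / 2) - Bq g1 g2 Qs i * (1 / (1 + sQ Qs) / 2 + 1 / (2 + sQ Qs) / 2))
      - 3 / 4 * Aq g1 g2 Q i + Bq g1 g2 Q i * (1 / (1 + sQ Q) / 2 + 1 / (2 + sQ Q) / 2)"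
  "bet g1 g2 i Q Qs 1 = Aq g1 g2 Q i / 2 - ((dd i 1 + tau Q i 1) * Aq g1 g2 Qs 1 + (dd i 2 + tau Q i 2) * Aq g1 g2 Qs 2) / 2
      + ((dd i 1 + tau Q i 1) * Bq g1 g2 Qs 1 + (dd i 2 + tau Q i 2) * Bq g1 g2 Qs 2) / (1 + sQ Qs) / 2"
  "bet g1 g2 i Q Qs 2 = Aq g1 g2 Q i / 4 - ((dd i 1 + tau Q i 1) * Aq g1 g2 Qs 1 + (dd i 2 + tau Q i 2) * Aq g1 g2 Qs 2) / 4
      + ((dd i 1 + tau Q i 1) * Bq g1 g2 Qs 1 + (dd i 2 + tau Q i 2) * Bq g1 g2 Qs 2) / (2 + sQ Qs) / 2"
  "bet g1 g2 i Q Qs 3 = - Bq g1 g2 Q i / (1 + sQ Q) / 2 + (tau Q i 1 * Aq g1 g2 Qs 1 + tau Q i 2 * Aq g1 g2 Qs 2) / 2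
      - (tau Q i 1 * Bq g1 g2 Qs 1 + tau Q i 2 * Bq g1 g2 Qs 2) / (1 + sQ Qs) / 2"
  "bet g1 g2 i Q Qs 4 = - Bq g1 g2 Q i / (2 + sQ Q) / 2 + (tau Q i 1 * Aq g1 g2 Qs 1 + tau Q i 2 * Aq g1 g2 Qs 2) / 4
      - (tau Q i 1 * Bq g1 g2 Qs 1 + tau Q i 2 * Bq g1 g2 Qs 2) / (2 + sQ Qs) / 2"
  by (simp_all add: bet_def Let_def)

lemma val0:
  assumes Q: "admissible Q" and Qs: "admissible Qs" and i: "i \<in> {1,2}"
  shows "ev5 (bet g1 g2 i Q Qs) (sQ Q) 0 = 0"
proof -
  have a: "dd i 1 * Aq g1 g2 Qs 1 + dd i 2 * Aq g1 g2 Qs 2 = Aq g1 g2 Qs i"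
     "dd i 1 * Bq g1 g2 Qs 1 + dd i 2 * Bq g1 g2 Qs 2 = Bq g1 g2 Qs i"
    using i by (auto simp: dd_def)
  show ?thesis
    unfolding ev5_0 bet_n val_abs a by simp
qed

lemma dv_abs:
  fixes s R1 R2 U1 V1 A1 A2 B1 B2 t1 t2 d1 d2 :: real
  assumes "1 + s \<noteq> 0" "2 + s \<noteq> 0" "R1 \<noteq> 0" "R2 \<noteq> 0" "t2 = - t1"
  shows "- (U1 / 2 - ((d1 + t1) * A1 + (d2 + t2) * A2) / 2 + ((d1 + t1) * B1 + (d2 + t2) * B2) / R1 / 2)
     - 2 * (U1 / 4 - ((d1 + t1) * A1 + (d2 + t2) * A2) / 4 + ((d1 + t1) * B1 + (d2 + t2) * B2) / R2 / 2)
     - (1 + s) * (- V1 / (1 + s) / 2 + (t1 * A1 + t2 * A2) / 2 - (t1 * B1 + t2 * B2) / R1 / 2)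
     - (2 + s) * (- V1 / (2 + s) / 2 + (t1 * A1 + t2 * A2) / 4 - (t1 * B1 + t2 * B2) / R2 / 2)
   = - (U1 - V1) + (d1 * A1 + d2 * A2) - (d1 * B1 + d2 * B2) * (1 / R1 / 2 + 1 / R2)
     + (s * t1) * (- (3 / 4) * (A1 - A2) + (B1 - B2) * (1 / R1 / 2 + 1 / R2 / 2))"
proof -
  have a: "(1 + s) * inverse (1 + s) = 1" "(2 + s) * inverse (2 + s) = 1" using assms by auto
  show ?thesis using a unfolding assms(5) divide_inverse by algebra
qed

lemma ev5_dv0: "ev5 (dv5 b s) s 0 = - b 1 - 2 * b 2 - (1 + s) * b 3 - (2 + s) * b 4"
  by (simp add: ev5_def dv5_def algebra_simps)

lemma dv0_eq:
  assumes Q: "admissible Q" and Qs: "admissible Qs" and i: "i \<in> {1,2}"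
  shows "ev5 (dv5 (bet g1 g2 i Q Qs) (sQ Q)) (sQ Q) 0 =
    - (Aq g1 g2 Q i - Bq g1 g2 Q i) + (dd i 1 * Aq g1 g2 Qs 1 + dd i 2 * Aq g1 g2 Qs 2)
    - (dd i 1 * Bq g1 g2 Qs 1 + dd i 2 * Bq g1 g2 Qs 2) * (1 / (1 + sQ Qs) / 2 + 1 / (2 + sQ Qs))
    + (sQ Q * tau Q i 1) * (- (3 / 4) * (Aq g1 g2 Qs 1 - Aq g1 g2 Qs 2)
        + (Bq g1 g2 Qs 1 - Bq g1 g2 Qs 2) * (1 / (1 + sQ Qs) / 2 + 1 / (2 + sQ Qs) / 2))"
proof -
  have nz: "1 + sQ Q \<noteq> 0" "2 + sQ Q \<noteq> 0" "1 + sQ Qs \<noteq> 0" "2 + sQ Qs \<noteq> 0"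
    using sQ_nonneg[OF Q] sQ_nonneg[OF Qs] by auto
  have t2: "tau Q i 2 = - tau Q i 1"
    using i by (auto simp: tau_def genQ_def)
  show ?thesis
    unfolding ev5_dv0 bet_def Let_def
    using dv_abs[OF nz t2, of "Aq g1 g2 Q i" "dd i 1" "Aq g1 g2 Qs 1" "dd i 2" "Aq g1 g2 Qs 2"
       "Bq g1 g2 Qs 1" "Bq g1 g2 Qs 2" "Bq g1 g2 Q i"]
    by simp
qed

lemma c_UV: "Aq g1 g2 Q i - Bq g1 g2 Q i = gQ g1 g2 Q i"
  by (simp add: Aq_def Bq_def)

lemma c_st:
  assumes Q: "admissible Q" and i: "i \<in> {1,2}"
  shows "sQ Q * tau Q i 1 = - genQ Q i 2"
proof (cases "sQ Q = 0")
  case True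
  then show ?thesis using adm_s0[OF Q True] by (simp add: tau_def)
next
  case False
  then show ?thesis using i by (auto simp: tau_def genQ_def sQ_def)
qed

lemma rid0: "(r::real) * w = 1 \<Longrightarrow> (1 + r) * u = 1 \<Longrightarrow> (2 + r) * v = 1 \<Longrightarrow> w * (1 - u / 2 - v) = u / 2 + v / 2"
  by algebra

lemma Qs_facts:
  assumes "p + q \<noteq> (0::real)"
  shows "Bq g1 g2 (p, q) 1 = p * (g2 q - g1 p) * (1 / (p + q))"
    "Bq g1 g2 (p, q) 2 = - (q * (g2 q - g1 p) * (1 / (p + q)))"
    "Aq g1 g2 (p, q) 1 = g1 p + p * (g2 q - g1 p) * (1 / (p + q))"
    "Aq g1 g2 (p, q) 2 = g2 q - q * (g2 q - g1 p) * (1 / (p + q))"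
    "sQ (p, q) = p + q"
  using assms by (simp_all add: Aq_def Bq_def kap_def gQ_def genQ_def sQ_def field_simps)

lemma c_bracket:
  assumes Qs: "admissible Qs"
  shows "- (3 / 4) * (Aq g1 g2 Qs 1 - Aq g1 g2 Qs 2)
        + (Bq g1 g2 Qs 1 - Bq g1 g2 Qs 2) * (1 / (1 + sQ Qs) / 2 + 1 / (2 + sQ Qs) / 2) = D0 g1 g2 Qs"
proof (cases "sQ Qs = 0")
  case True
  then have "fst Qs = 0" "snd Qs = 0" using Qs by (auto simp: admissible_def sQ_def)
  then show ?thesis using True
    by (simp add: Aq_def Bq_def D0_def kap_def gQ_def genQ_def field_simps)
next
  case False
  obtain p q where pq: "Qs = (p, q)" by (cases Qs)
  have r: "p + q \<noteq> 0" using False pq by (simp add: sQ_def)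
  define E where "E = g2 q - g1 p"
  define w where "w = 1 / (p + q)"
  have w: "(p + q) * w = 1" using r by (simp add: w_def)
  have d1: "Aq g1 g2 Qs 1 - Aq g1 g2 Qs 2 = - E + E * ((p + q) * w)"
    unfolding pq Qs_facts[OF r] E_def[symmetric] w_def[symmetric] by (simp add: E_def algebra_simps)
  have d2: "Bq g1 g2 Qs 1 - Bq g1 g2 Qs 2 = E * ((p + q) * w)"
    unfolding pq Qs_facts[OF r] E_def[symmetric] w_def[symmetric] by (simp add: algebra_simps)
  show ?thesis unfolding d1 d2 w using pq by (simp add: D0_def E_def sQ_def)
qed

lemma c_A:
  assumes Qs: "admissible Qs" and i: "i \<in> {1,2}"
  shows "(dd i 1 * Aq g1 g2 Qs 1 + dd i 2 * Aq g1 g2 Qs 2)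
    - (dd i 1 * Bq g1 g2 Qs 1 + dd i 2 * Bq g1 g2 Qs 2) * (1 / (1 + sQ Qs) / 2 + 1 / (2 + sQ Qs))
    = gQ g1 g2 Qs i + genQ Qs i 2 * D0 g1 g2 Qs"
proof (cases "sQ Qs = 0")
  case True
  then have "fst Qs = 0" "snd Qs = 0" using Qs by (auto simp: admissible_def sQ_def)
  then show ?thesis using True i
    by (auto simp: Aq_def Bq_def D0_def kap_def gQ_def genQ_def dd_def)
next
  case False
  obtain p q where pq: "Qs = (p, q)" by (cases Qs)
  have r: "p + q \<noteq> 0" using False pq by (simp add: sQ_def)
  have nz: "1 + (p + q) \<noteq> 0" "2 + (p + q) \<noteq> 0" using Qs pq by (auto simp: admissible_def)
  define E where "E = g2 q - g1 p"
  define w where "w = 1 / (p + q)"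
  define u1 where "u1 = 1 / (1 + (p + q))"
  define u2 where "u2 = 1 / (2 + (p + q))"
  have rid': "w * (1 - u1 / 2 - u2) = u1 / 2 + u2 / 2"
    unfolding w_def u1_def u2_def by (rule rid0) (use r nz in auto)
  have D: "D0 g1 g2 (p, q) = (u1 / 2 + u2 / 2) * E"
    by (simp add: D0_def sQ_def u1_def u2_def E_def)
  have i2: "i = 1 \<or> i = 2" using i by auto
  then show ?thesis
  proof
    assume i1: "i = 1"
    have "p * E * w - p * E * w * (u1 / 2 + u2) = p * E * (w * (1 - u1 / 2 - u2))"
      by (simp add: algebra_simps)
    also have "\<dots> = p * ((u1 / 2 + u2 / 2) * E)" using rid' by simp
    finally have key: "p * E * w - p * E * w * (u1 / 2 + u2) = p * ((u1 / 2 + u2 / 2) * E)" .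
    show ?thesis unfolding D i1 pq Qs_facts[OF r] E_def[symmetric] w_def[symmetric]
        u1_def[symmetric] u2_def[symmetric]
      using key by (simp add: dd_def gQ_def genQ_def)
  next
    assume i1: "i = 2"
    have "- (q * E * w) + q * E * w * (u1 / 2 + u2) = - q * E * (w * (1 - u1 / 2 - u2))"
      by (simp add: algebra_simps)
    also have "\<dots> = - q * ((u1 / 2 + u2 / 2) * E)" using rid' by simp
    finally have key: "- (q * E * w) + q * E * w * (u1 / 2 + u2) = - q * ((u1 / 2 + u2 / 2) * E)" .
    show ?thesis unfolding D i1 pq Qs_facts[OF r] E_def[symmetric] w_def[symmetric]
        u1_def[symmetric] u2_def[symmetric]
      using key by (simp add: dd_def gQ_def genQ_def)
  qed
qed

lemma der0:
  assumes Q: "admissible Q" and Qs: "admissible Qs" and i: "i \<in> {1,2}"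
  shows "ev5 (dv5 (bet g1 g2 i Q Qs) (sQ Q)) (sQ Q) 0 = Hf g1 g2 Qs Qs i - Hf g1 g2 Q Qs i"
proof -
  have "ev5 (dv5 (bet g1 g2 i Q Qs) (sQ Q)) (sQ Q) 0 =
    - (Aq g1 g2 Q i - Bq g1 g2 Q i) + ((dd i 1 * Aq g1 g2 Qs 1 + dd i 2 * Aq g1 g2 Qs 2)
    - (dd i 1 * Bq g1 g2 Qs 1 + dd i 2 * Bq g1 g2 Qs 2) * (1 / (1 + sQ Qs) / 2 + 1 / (2 + sQ Qs)))
    + (sQ Q * tau Q i 1) * (- (3 / 4) * (Aq g1 g2 Qs 1 - Aq g1 g2 Qs 2)
        + (Bq g1 g2 Qs 1 - Bq g1 g2 Qs 2) * (1 / (1 + sQ Qs) / 2 + 1 / (2 + sQ Qs) / 2))"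
    using dv0_eq[OF Q Qs i, where ?g1.0 = g1 and ?g2.0 = g2] by linarith
  also have "\<dots> = Hf g1 g2 Qs Qs i - Hf g1 g2 Q Qs i"
    unfolding c_UV c_st[OF Q i] c_bracket[OF Qs] c_A[OF Qs i] Hf_def by simp
  finally show ?thesis .
qed

lemma quot_lim:
  assumes d: "(f has_real_derivative L) (at 0)" and f0: "f 0 = 0"
  shows "((\<lambda>x. f x / x) \<longlongrightarrow> L) (at_right 0)"
proof -
  have "((\<lambda>y. (f y - f 0) / (y - 0)) \<longlongrightarrow> L) (at 0)"
    using d by (simp add: has_field_derivative_iff)
  then have "((\<lambda>y. f y / y) \<longlongrightarrow> L) (at 0)" using f0 by simp
  then show ?thesis by (rule tendsto_mono[OF at_le, rotated]) simp
qed

lemma ev5_quot: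
  assumes "ev5 b s 0 = 0"
  shows "((\<lambda>x. ev5 b s x / x) \<longlongrightarrow> ev5 (dv5 b s) s 0) (at_right 0)"
  by (rule quot_lim[OF ev5_deriv assms])

lemma eventually_to_ex:
  assumes "eventually P (at_right (0::real))"
  shows "\<exists>e>0. \<forall>x. 0 < x \<and> x \<le> e \<longrightarrow> P x"
proof -
  obtain b where b: "b > 0" "\<And>y. y > 0 \<Longrightarrow> y < b \<Longrightarrow> P y"
    using assms unfolding eventually_at_right_field by auto
  show ?thesis by (rule exI[of _ "b / 2"]) (use b in auto)
qed

lemma ev5_pos1:
  assumes "ev5 b s 0 = 0" "ev5 (dv5 b s) s 0 > 0"
  shows "\<exists>e>0. \<forall>x. 0 < x \<and> x \<le> e \<longrightarrow> ev5 b s x \<ge> 0"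
proof -
  have "eventually (\<lambda>x. ev5 b s x / x > 0) (at_right 0)"
    using order_tendstoD(1)[OF ev5_quot[OF assms(1)] assms(2)] .
  moreover have "eventually (\<lambda>x. x > (0::real)) (at_right 0)" by (rule eventually_at_right_less)
  ultimately have "eventually (\<lambda>x. ev5 b s x \<ge> 0) (at_right 0)"
    by eventually_elim (simp add: zero_less_divide_iff)
  then show ?thesis by (rule eventually_to_ex)
qed

lemma ev5_pos2:
  assumes "ev5 b s 0 = 0" "ev5 (dv5 b s) s 0 = 0" "ev5 (dv5 (dv5 b s) s) s 0 > 0"
  shows "\<exists>e>0. \<forall>x. 0 < x \<and> x \<le> e \<longrightarrow> ev5 b s x \<ge> 0"
proof -
  have "eventually (\<lambda>x. ev5 (dv5 b s) s x / x > 0) (at_right 0)"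
    using order_tendstoD(1)[OF ev5_quot[OF assms(2)] assms(3)] .
  moreover have "eventually (\<lambda>x. x > (0::real)) (at_right 0)" by (rule eventually_at_right_less)
  ultimately have "eventually (\<lambda>x. ev5 (dv5 b s) s x > 0) (at_right 0)"
    by eventually_elim (simp add: zero_less_divide_iff)
  then obtain e where e: "e > 0" "\<And>x. 0 < x \<Longrightarrow> x \<le> e \<Longrightarrow> ev5 (dv5 b s) s x > 0"
    using eventually_to_ex by blast
  have "ev5 b s x \<ge> 0" if x: "0 < x" "x \<le> e" for x
  proof -
    obtain z where z: "0 < z" "z < x" "ev5 b s x - ev5 b s 0 = (x - 0) * ev5 (dv5 b s) s z"
      using MVT2[OF x(1), of "ev5 b s" "ev5 (dv5 b s) s"] ev5_deriv by blast
    have "ev5 (dv5 b s) s z > 0" using e(2)[of z] z x by auto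
    then show ?thesis using z x assms(1) by simp
  qed
  then show ?thesis using e(1) by blast
qed

lemma liminf_G:
  assumes Q: "admissible Q" and Qs: "admissible Qs" and i: "i \<in> {1,2}"
  shows "Liminf (at_right 0) (\<lambda>e. ereal ((F dl g1 g2 i Qs - Fcat dl g1 g2 i Q e Qs) / e))
      = ereal (Hf g1 g2 Qs Qs i - Hf g1 g2 Q Qs i)"
proof -
  have lim: "((\<lambda>x. ev5 (bet g1 g2 i Q Qs) (sQ Q) x / x) \<longlongrightarrow> Hf g1 g2 Qs Qs i - Hf g1 g2 Q Qs i) (at_right 0)"
    using ev5_quot[OF val0[OF Q Qs i]] der0[OF Q Qs i] by simp
  have ev: "eventually (\<lambda>x. ev5 (bet g1 g2 i Q Qs) (sQ Q) x / x = (F dl g1 g2 i Qs - Fcat dl g1 g2 i Q x Qs) / x)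
      (at_right 0)"
    using eventually_at_right_less[of "0::real"] by eventually_elim (simp add: G_eq[OF Q Qs i])
  have "((\<lambda>x. (F dl g1 g2 i Qs - Fcat dl g1 g2 i Q x Qs) / x) \<longlongrightarrow> Hf g1 g2 Qs Qs i - Hf g1 g2 Q Qs i) (at_right 0)"
    using tendsto_cong[OF ev] lim by blast
  then show ?thesis
    by (intro lim_imp_Liminf) (auto intro: tendsto_ereal)
qed

lemma d2_abs:
  fixes s R1 R2 U1 V1 A1 A2 B1 B2 t1 t2 d1 d2 :: real
  assumes "1 + s \<noteq> 0" "2 + s \<noteq> 0" "t2 = - t1"
  shows "(U1 / 2 - ((d1 + t1) * A1 + (d2 + t2) * A2) / 2 + ((d1 + t1) * B1 + (d2 + t2) * B2) / R1 / 2)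
     + 4 * (U1 / 4 - ((d1 + t1) * A1 + (d2 + t2) * A2) / 4 + ((d1 + t1) * B1 + (d2 + t2) * B2) / R2 / 2)
     + (1 + s)\<^sup>2 * (- V1 / (1 + s) / 2 + (t1 * A1 + t2 * A2) / 2 - (t1 * B1 + t2 * B2) / R1 / 2)
     + (2 + s)\<^sup>2 * (- V1 / (2 + s) / 2 + (t1 * A1 + t2 * A2) / 4 - (t1 * B1 + t2 * B2) / R2 / 2)
   = 3 / 2 * (U1 - V1 - (d1 * A1 + d2 * A2)) - s * V1 + (d1 * B1 + d2 * B2) * (1 / R1 / 2 + 2 / R2)
     + t1 * (A1 - A2) * ((1 + s)\<^sup>2 / 2 + (2 + s)\<^sup>2 / 4 - 3 / 2)
     + t1 * (B1 - B2) * (1 / R1 / 2 + 2 / R2 - (1 + s)\<^sup>2 / R1 / 2 - (2 + s)\<^sup>2 / R2 / 2)"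
proof -
  have e1: "(1 + s)\<^sup>2 * ((- V1 / (1 + s) / 2 + X) - Y) = - V1 * (1 + s) / 2 + (1 + s)\<^sup>2 * (X - Y)" for X Y
    using assms(1) by (simp add: field_simps power2_eq_square)
  have e2: "(2 + s)\<^sup>2 * ((- V1 / (2 + s) / 2 + X) - Y) = - V1 * (2 + s) / 2 + (2 + s)\<^sup>2 * (X - Y)" for X Y
    using assms(2) by (simp add: field_simps power2_eq_square)
  show ?thesis unfolding e1 e2 assms(3)
    by (simp add: algebra_simps add_divide_distrib diff_divide_distrib power2_eq_square)
qed

definition g1c :: "real \<Rightarrow> real" where "g1c = (\<lambda>a. - (a ^ 2))"
definition g2c :: "real \<Rightarrow> real" where "g2c = (\<lambda>b. 2 - (1 - b) ^ 2)"

lemma ev5_dv2: "ev5 (dv5 (dv5 b s) s) s 0 = b 1 + 4 * b 2 + (1 + s)\<^sup>2 * b 3 + (2 + s)\<^sup>2 * b 4"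
  by (simp add: ev5_def dv5_def power2_eq_square algebra_simps)

lemma Qs0_vals:
  "Aq g1c g2c (5/12, 7/12) 1 = 95/144" "Aq g1c g2c (5/12, 7/12) 2 = 95/144"
  "Bq g1c g2c (5/12, 7/12) 1 = 5/6" "Bq g1c g2c (5/12, 7/12) 2 = - 7/6"
  "sQ (5/12, 7/12) = 1" "gQ g1c g2c (5/12, 7/12) 1 = - 25/144" "gQ g1c g2c (5/12, 7/12) 2 = 263/144"
  by (simp_all add: Aq_def Bq_def kap_def gQ_def genQ_def sQ_def g1c_def g2c_def power2_eq_square)

lemma d2_gen:
  assumes Q: "admissible Q" and i: "i \<in> {1,2}" and s: "sQ Q > 0"
  shows "ev5 (dv5 (dv5 (bet g1c g2c i Q (5/12, 7/12)) (sQ Q)) (sQ Q)) (sQ Q) 0 =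
     3 / 2 * (gQ g1c g2c Q i - 95/144) - kap g1c g2c Q i
     + (dd i 1 * (5/6) + dd i 2 * (- 7/6)) * (11/12)
     + genQ Q i 2 * (14 + 5 * sQ Q) / 6"
proof -
  have nz: "1 + sQ Q \<noteq> 0" "2 + sQ Q \<noteq> 0" using s by auto
  have t2: "tau Q i 2 = - tau Q i 1" using i by (auto simp: tau_def genQ_def)
  have sv: "sQ Q * Bq g1c g2c Q i = kap g1c g2c Q i" using s by (simp add: Bq_def)
  have st: "sQ Q * tau Q i 1 = - genQ Q i 2" by (rule c_st[OF Q i])
  have poly: "tau Q i 1 * (5/6 - - 7/6) * (1 / (1 + 1) / 2 + 2 / (2 + 1) - (1 + sQ Q)\<^sup>2 / (1 + 1) / 2
      - (2 + sQ Q)\<^sup>2 / (2 + 1) / 2) = - (sQ Q * tau Q i 1) * (14 + 5 * sQ Q) / 6"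
    by (simp add: field_simps power2_eq_square)
  have "ev5 (dv5 (dv5 (bet g1c g2c i Q (5/12, 7/12)) (sQ Q)) (sQ Q)) (sQ Q) 0 =
     3 / 2 * (Aq g1c g2c Q i - Bq g1c g2c Q i - (dd i 1 * (95/144) + dd i 2 * (95/144)))
     - sQ Q * Bq g1c g2c Q i + (dd i 1 * (5/6) + dd i 2 * (- 7/6)) * (1 / (1 + 1) / 2 + 2 / (2 + 1))
     + tau Q i 1 * (95/144 - 95/144) * ((1 + sQ Q)\<^sup>2 / 2 + (2 + sQ Q)\<^sup>2 / 4 - 3 / 2)
     + tau Q i 1 * (5/6 - - 7/6) * (1 / (1 + 1) / 2 + 2 / (2 + 1) - (1 + sQ Q)\<^sup>2 / (1 + 1) / 2
        - (2 + sQ Q)\<^sup>2 / (2 + 1) / 2)"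
    unfolding ev5_dv2 bet_n d2_abs[OF nz t2] Qs0_vals ..
  also have "\<dots> = 3 / 2 * (gQ g1c g2c Q i - 95/144) - kap g1c g2c Q i
     + (dd i 1 * (5/6) + dd i 2 * (- 7/6)) * (11/12)
     + genQ Q i 2 * (14 + 5 * sQ Q) / 6"
    unfolding poly sv st c_UV using i by (auto simp: dd_def)
  finally show ?thesis .
qed

lemma d2_1:
  assumes b: "b \<ge> 0"
  shows "ev5 (dv5 (dv5 (bet g1c g2c 1 (5/12, b) (5/12, 7/12)) (sQ (5/12, b))) (sQ (5/12, b))) (sQ (5/12, b)) 0
     = 5 / 12 * (b - 7/12)\<^sup>2"
proof -
  have Q: "admissible (5/12, b)" using b by (simp add: admissible_def)
  have s: "sQ (5/12, b) > 0" using b by (simp add: sQ_def)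
  have i: "(1::nat) \<in> {1,2}" by simp
  show ?thesis unfolding d2_gen[OF Q i s]
    by (simp add: gQ_def kap_def genQ_def dd_def sQ_def g1c_def g2c_def power2_eq_square field_simps)
qed

lemma d2_2:
  assumes a: "a \<ge> 0"
  shows "ev5 (dv5 (dv5 (bet g1c g2c 2 (a, 7/12) (5/12, 7/12)) (sQ (a, 7/12))) (sQ (a, 7/12))) (sQ (a, 7/12)) 0
     = 7 / 12 * (a - 5/12)\<^sup>2"
proof -
  have Q: "admissible (a, 7/12)" using a by (simp add: admissible_def)
  have s: "sQ (a, 7/12) > 0" using a by (simp add: sQ_def)
  have i: "(2::nat) \<in> {1,2}" by simp
  show ?thesis unfolding d2_gen[OF Q i s]
    by (simp add: gQ_def kap_def genQ_def dd_def sQ_def g1c_def g2c_def power2_eq_square field_simps)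
qed

lemma bet_self_zero:
  assumes i: "i \<in> {1,2}"
  shows "ev5 (bet g1c g2c i (5/12, 7/12) (5/12, 7/12)) (sQ (5/12, 7/12)) x = 0"
proof -
  have "i = 1 \<or> i = 2" using i by auto
  then show ?thesis
  proof
    assume i1: "i = 1"
    show ?thesis unfolding i1 ev5_def bet_n Qs0_vals by (simp add: tau_def genQ_def dd_def sQ_def)
  next
    assume i1: "i = 2"
    show ?thesis unfolding i1 ev5_def bet_n Qs0_vals by (simp add: tau_def genQ_def dd_def sQ_def)
  qed
qed

lemma Hf_diff:
  "Hf g1c g2c (5/12, 7/12) (5/12, 7/12) 1 - Hf g1c g2c (a, b) (5/12, 7/12) 1 = (a - 5/12)\<^sup>2"
  "Hf g1c g2c (5/12, 7/12) (5/12, 7/12) 2 - Hf g1c g2c (a, b) (5/12, 7/12) 2 = (b - 7/12)\<^sup>2"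
  by (simp_all add: Hf_def gQ_def genQ_def D0_def sQ_def g1c_def g2c_def power2_eq_square field_simps)

lemma weakQ0: "weak_eq dl g1c g2c (5/12, 7/12)"
  unfolding weak_eq_def
proof (intro conjI allI impI)
  show adm0: "admissible (5/12, 7/12::real)" by (simp add: admissible_def)
  fix Q :: gen and i :: nat
  assume h: "admissible Q \<and> i \<in> {1, 2}"
  obtain a b where ab: "Q = (a, b)" by (cases Q)
  have "i = 1 \<or> i = 2" using h by auto
  then have "0 \<le> Hf g1c g2c (5/12, 7/12) (5/12, 7/12) i - Hf g1c g2c Q (5/12, 7/12) i"
  proof
    assume i1: "i = 1"
    show ?thesis unfolding i1 ab Hf_diff by simp
  next
    assume i1: "i = 2"
    show ?thesis unfolding i1 ab Hf_diff by simp
  qed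
  then show "0 \<le> Liminf (at_right 0)
          (\<lambda>\<epsilon>. ereal ((F dl g1c g2c i (5/12, 7/12) - Fcat dl g1c g2c i Q \<epsilon> (5/12, 7/12)) / \<epsilon>))"
    unfolding liminf_G[OF conjunct1[OF h] adm0 conjunct2[OF h]] by simp
qed

lemma strong_aux:
  assumes Q: "admissible Q" and i: "i \<in> {1,2}"
  shows "\<exists>e>0. \<forall>x. 0 < x \<and> x \<le> e \<longrightarrow> ev5 (bet g1c g2c i Q (5/12, 7/12)) (sQ Q) x \<ge> 0"
proof -
  define Qs :: gen where "Qs = (5/12, 7/12)"
  have adm0: "admissible Qs" by (simp add: Qs_def admissible_def)
  obtain a b where ab: "Q = (a, b)" by (cases Q)
  have a: "a \<ge> 0" "b \<ge> 0" using Q ab by (auto simp: admissible_def)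
  have v0: "ev5 (bet g1c g2c i Q Qs) (sQ Q) 0 = 0" by (rule val0[OF Q adm0 i])
  have d0: "ev5 (dv5 (bet g1c g2c i Q Qs) (sQ Q)) (sQ Q) 0 = Hf g1c g2c Qs Qs i - Hf g1c g2c Q Qs i"
    by (rule der0[OF Q adm0 i])
  have i2: "i = 1 \<or> i = 2" using i by auto
  have "\<exists>e>0. \<forall>x. 0 < x \<and> x \<le> e \<longrightarrow> ev5 (bet g1c g2c i Q Qs) (sQ Q) x \<ge> 0"
  proof (cases "Hf g1c g2c Qs Qs i - Hf g1c g2c Q Qs i > 0")
    case True
    then show ?thesis using ev5_pos1[OF v0] d0 by simp
  next
    case False
    from i2 show ?thesis
    proof
      assume i1: "i = 1"
      have "(a - 5/12)\<^sup>2 \<le> 0" using False unfolding i1 ab Qs_def Hf_diff by simp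
      then have a5: "a = 5/12" by simp
      show ?thesis
      proof (cases "b = 7/12")
        case True
        then have "Q = Qs" using ab a5 Qs_def by simp
        then show ?thesis using bet_self_zero[OF i] unfolding Qs_def by (intro exI[of _ 1]) auto
      next
        case bF: False
        have d0': "ev5 (dv5 (bet g1c g2c i Q Qs) (sQ Q)) (sQ Q) 0 = 0"
          using d0 unfolding i1 ab Qs_def Hf_diff a5 by simp
        have "ev5 (dv5 (dv5 (bet g1c g2c i Q Qs) (sQ Q)) (sQ Q)) (sQ Q) 0 = 5 / 12 * (b - 7/12)\<^sup>2"
          unfolding i1 ab a5 Qs_def by (rule d2_1[OF a(2)])
        moreover have "5 / 12 * (b - 7/12)\<^sup>2 > 0" using bF by simp
        ultimately have "ev5 (dv5 (dv5 (bet g1c g2c i Q Qs) (sQ Q)) (sQ Q)) (sQ Q) 0 > 0" by linarith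
        then show ?thesis using ev5_pos2[OF v0 d0'] by simp
      qed
    next
      assume i1: "i = 2"
      have "(b - 7/12)\<^sup>2 \<le> 0" using False unfolding i1 ab Qs_def Hf_diff by simp
      then have b7: "b = 7/12" by simp
      show ?thesis
      proof (cases "a = 5/12")
        case True
        then have "Q = Qs" using ab b7 Qs_def by simp
        then show ?thesis using bet_self_zero[OF i] unfolding Qs_def by (intro exI[of _ 1]) auto
      next
        case aF: False
        have d0': "ev5 (dv5 (bet g1c g2c i Q Qs) (sQ Q)) (sQ Q) 0 = 0"
          using d0 unfolding i1 ab Qs_def Hf_diff b7 by simp
        have "ev5 (dv5 (dv5 (bet g1c g2c i Q Qs) (sQ Q)) (sQ Q)) (sQ Q) 0 = 7 / 12 * (a - 5/12)\<^sup>2"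
          unfolding i1 ab b7 Qs_def by (rule d2_2[OF a(1)])
        moreover have "7 / 12 * (a - 5/12)\<^sup>2 > 0" using aF by simp
        ultimately have "ev5 (dv5 (dv5 (bet g1c g2c i Q Qs) (sQ Q)) (sQ Q)) (sQ Q) 0 > 0" by linarith
        then show ?thesis using ev5_pos2[OF v0 d0'] by simp
      qed
    qed
  qed
  then show ?thesis unfolding Qs_def .
qed

lemma strongQ0: "strong_eq dl g1c g2c (5/12, 7/12)"
  unfolding strong_eq_def
proof (intro conjI allI impI)
  show adm0: "admissible (5/12, 7/12::real)" by (simp add: admissible_def)
  fix Q :: gen and i :: nat
  assume h: "admissible Q \<and> i \<in> {1, 2}"
  obtain e where e: "e > 0" "\<And>x. 0 < x \<Longrightarrow> x \<le> e \<Longrightarrow> ev5 (bet g1c g2c i Q (5/12, 7/12)) (sQ Q) x \<ge> 0"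
    using strong_aux[OF conjunct1[OF h] conjunct2[OF h]] by blast
  show "\<exists>\<epsilon>>0. \<forall>\<epsilon>'. 0 < \<epsilon>' \<and> \<epsilon>' \<le> \<epsilon> \<longrightarrow>
           Fcat dl g1c g2c i Q \<epsilon>' (5/12, 7/12) \<le> F dl g1c g2c i (5/12, 7/12)"
  proof (intro exI[of _ e] conjI allI impI)
    show "e > 0" by (rule e(1))
    fix x assume x: "0 < x \<and> x \<le> e"
    have "0 \<le> F dl g1c g2c i (5/12, 7/12) - Fcat dl g1c g2c i Q x (5/12, 7/12)"
      using G_eq[OF conjunct1[OF h] adm0 conjunct2[OF h], of x] e(2)[of x] x by simp
    then show "Fcat dl g1c g2c i Q x (5/12, 7/12) \<le> F dl g1c g2c i (5/12, 7/12)" by simp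
  qed
qed

lemma uniq:
  assumes w: "weak_eq dl g1c g2c Qs"
  shows "Qs = (5/12, 7/12)"
proof -
  have adm: "admissible Qs" using w by (simp add: weak_eq_def)
  obtain p q where pq: "Qs = (p, q)" by (cases Qs)
  have p0: "p \<ge> 0" "q \<ge> 0" using adm pq by (auto simp: admissible_def)
  define D where "D = D0 g1c g2c Qs"
  have H: "Hf g1c g2c Q Qs i \<le> Hf g1c g2c Qs Qs i" if "admissible Q" "i \<in> {1,2}" for Q i
  proof -
    have "0 \<le> Liminf (at_right 0)
          (\<lambda>\<epsilon>. ereal ((F dl g1c g2c i Qs - Fcat dl g1c g2c i Q \<epsilon> Qs) / \<epsilon>))"
      using w that unfolding weak_eq_def by blast
    then have "0 \<le> ereal (Hf g1c g2c Qs Qs i - Hf g1c g2c Q Qs i)"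
      unfolding liminf_G[OF that(1) adm that(2)] .
    then show ?thesis by simp
  qed
  have h1: "- (x\<^sup>2) + x * D \<le> - (p\<^sup>2) + p * D" if "x \<ge> 0" for x
  proof -
    have "Hf g1c g2c (x, 0) Qs 1 \<le> Hf g1c g2c Qs Qs 1" using H[of "(x, 0)" 1] that by (simp add: admissible_def)
    then show ?thesis unfolding D_def using pq by (simp add: Hf_def gQ_def genQ_def g1c_def)
  qed
  have h2: "- ((1 - y)\<^sup>2) - y * D \<le> - ((1 - q)\<^sup>2) - q * D" if "y \<ge> 0" for y
  proof -
    have "Hf g1c g2c (0, y) Qs 2 \<le> Hf g1c g2c Qs Qs 2" using H[of "(0, y)" 2] that by (simp add: admissible_def)
    then show ?thesis unfolding D_def using pq by (simp add: Hf_def gQ_def genQ_def g2c_def)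
  qed
  define r where "r = p + q"
  define c where "c = 1 / (1 + r) / 2 + 1 / (2 + r) / 2"
  define E where "E = 2 - (1 - q)\<^sup>2 + p\<^sup>2"
  have DcE: "D = c * E" unfolding D_def pq c_def E_def r_def by (simp add: D0_def sQ_def g1c_def g2c_def)
  have r0: "r \<ge> 0" using p0 r_def by simp
  have cpos: "c > 0"
  proof -
    have "1 / (1 + r) / 2 > 0" "1 / (2 + r) / 2 > 0" using r0 by simp_all
    then show ?thesis unfolding c_def by linarith
  qed
  have cle: "c * (1 + r) \<le> 1"
  proof -
    define u where "u = 1 / (1 + r)"
    define v where "v = 1 / (2 + r)"
    have "v \<le> u" unfolding u_def v_def by (rule divide_left_mono) (use r0 in auto)
    then have "c \<le> 1 / (1 + r)" unfolding c_def u_def[symmetric] v_def[symmetric] by linarith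
    then have "c * (1 + r) \<le> 1 / (1 + r) * (1 + r)" using r0 by (intro mult_right_mono) auto
    also have "\<dots> = 1" using r0 by simp
    finally show ?thesis .
  qed
  have pA: "D \<ge> 0 \<Longrightarrow> p = D / 2"
  proof -
    assume D0: "D \<ge> 0"
    have "- ((D/2)\<^sup>2) + D/2 * D \<le> - (p\<^sup>2) + p * D" using h1[of "D/2"] D0 by simp
    moreover have "(D/2)\<^sup>2 = D\<^sup>2 / 4" "D/2 * D = D\<^sup>2 / 2" "(p - D/2)\<^sup>2 = p\<^sup>2 - p * D + D\<^sup>2 / 4"
      by (simp_all add: power2_eq_square field_simps)
    ultimately have "(p - D/2)\<^sup>2 \<le> 0" by linarith
    then have "(p - D/2)\<^sup>2 = 0" by (simp add: antisym)
    then show "p = D / 2" by simp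
  qed
  have pB: "D < 0 \<Longrightarrow> p = 0"
  proof -
    assume D0: "D < 0"
    have "0 \<le> - (p\<^sup>2) + p * D" using h1[of 0] by simp
    moreover have "p * D \<le> 0" using p0 D0 by (simp add: mult_nonneg_nonpos)
    ultimately have "p\<^sup>2 \<le> 0" by linarith
    then show "p = 0" by simp
  qed
  have qA: "D \<le> 2 \<Longrightarrow> q = 1 - D / 2"
  proof -
    assume D2: "D \<le> 2"
    have "- ((1 - (1 - D/2))\<^sup>2) - (1 - D/2) * D \<le> - ((1 - q)\<^sup>2) - q * D" using h2[of "1 - D/2"] D2 by simp
    moreover have "(1 - (1 - D/2))\<^sup>2 = D\<^sup>2 / 4" "(1 - D/2) * D = D - D\<^sup>2 / 2"
      "(q - 1 + D/2)\<^sup>2 = (1 - q)\<^sup>2 + q * D - D + D\<^sup>2 / 4"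
      by (simp_all add: power2_eq_square field_simps)
    ultimately have "(q - 1 + D/2)\<^sup>2 \<le> 0" by linarith
    then have "(q - 1 + D/2)\<^sup>2 = 0" by (simp add: antisym)
    then show "q = 1 - D / 2" by simp
  qed
  have qB: "D > 2 \<Longrightarrow> q = 0"
  proof (rule ccontr)
    assume D2: "D > 2" and qn: "q \<noteq> 0"
    have "- 1 \<le> - ((1 - q)\<^sup>2) - q * D" using h2[of 0] by simp
    moreover have "(1 - q)\<^sup>2 = 1 - 2 * q + q * q" by (simp add: power2_eq_square algebra_simps)
    moreover have "q * (q + D - 2) > 0" using qn p0 D2 by (intro mult_pos_pos) auto
    moreover have "q * (q + D - 2) = q * q + q * D - 2 * q" by (simp add: algebra_simps)
    ultimately show False by linarith
  qed
  show ?thesis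
  proof (cases "D < 0")
    case True
    then have p00: "p = 0" and q1: "q = 1 - D / 2" using pB qA by auto
    have qg: "q > 1" using q1 True by simp
    have Eq: "E = 2 - (1 - q)\<^sup>2" unfolding E_def p00 by simp
    have rq: "r = q" unfolding r_def p00 by simp
    have En: "E < 0"
    proof (rule ccontr)
      assume "\<not> E < 0"
      then have "c * E \<ge> 0" using cpos by simp
      then show False using DcE True by simp
    qed
    have "1 * E \<le> (c * (1 + q)) * E" using cle rq En by (intro mult_right_mono_neg) auto
    then have "E \<le> D * (1 + q)" using DcE by (simp add: algebra_simps)
    moreover have "D = 2 - 2 * q" using q1 by simp
    moreover have "(1 - q)\<^sup>2 = 1 - 2 * q + q * q" by (simp add: power2_eq_square algebra_simps)
    moreover have "(2 - 2 * q) * (1 + q) = 2 - 2 * (q * q)" by (simp add: algebra_simps)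
    moreover have "q * q > 1" using qg by (simp add: less_1_mult)
    ultimately have False using Eq qg by (simp add: algebra_simps)
    then show ?thesis ..
  next
    case False
    show ?thesis
    proof (cases "D > 2")
      case True
      then have p2: "p = D / 2" and q00: "q = 0" using pA qB by auto
      have pg: "p > 1" using p2 True by simp
      have Eq: "E = 1 + p * p" unfolding E_def q00 by (simp add: power2_eq_square)
      have rp: "r = p" unfolding r_def q00 by simp
      have Epos: "E > 0" using Eq by (simp add: add_pos_nonneg)
      have "(c * (1 + p)) * E \<le> 1 * E" using cle rp Epos by (intro mult_right_mono) auto
      then have "D * (1 + p) \<le> E" using DcE by (simp add: algebra_simps)
      moreover have "D = 2 * p" using p2 by simp
      moreover have "p * p > 1" using pg by (simp add: less_1_mult)
      ultimately have False using Eq pg by (simp add: algebra_simps)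
      then show ?thesis ..
    next
      case False2: False
      have p2: "p = D / 2" and q2: "q = 1 - D / 2" using pA qA False False2 by auto
      have r1: "r = 1" unfolding r_def p2 q2 by simp
      have c1: "c = 5 / 12" unfolding c_def r1 by simp
      have E2: "E = 2" unfolding E_def p2 q2 by (simp add: power2_eq_square algebra_simps)
      have "D = 5 / 6" using DcE c1 E2 by simp
      then show ?thesis using pq p2 q2 by simp
    qed
  qed
qed

theorem mainTheorem12:
  fixes \<delta> g1 g2 :: "real \<Rightarrow> real"
  assumes "\<delta> = (\<lambda>t. exp (- t) / 2 + exp (- 2 * t) / 2)"
    and "g1 = (\<lambda>a. - (a ^ 2))"
    and "g2 = (\<lambda>b. 2 - (1 - b) ^ 2)"
  shows "weak_eq \<delta> g1 g2 (5/12, 7/12)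
    \<and> (\<forall>Q. weak_eq \<delta> g1 g2 Q \<longrightarrow> Q = (5/12, 7/12))
    \<and> strong_eq \<delta> g1 g2 (5/12, 7/12)"
proof -
  have d: "\<delta> = dl" using assms(1) by (simp add: dl_def fun_eq_iff)
  have a: "g1 = g1c" using assms(2) by (simp add: g1c_def)
  have b: "g2 = g2c" using assms(3) by (simp add: g2c_def)
  show ?thesis unfolding d a b using weakQ0 uniq strongQ0 by blast
qed

end
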